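(* Let $n\ge 2$ and $1\le m\le n-1$. Write $g\in \mathrm{SO}(n)$ as a block matrix $g=\begin{pmatrix}P&Q\\ R&T\end{pmatrix}$ with blocks of sizes $(m+(n-m))\times(m+(n-m))$, and define (for all $g$ with $\det(1+P)\neq 0$, i.e. almost everywhere) $$\Upsilon^m(g)=T-R(1+P)^{-1}Q .$$ Then: (a) $\Upsilon^m$ maps $\mathrm{SO}(n)$ (where defined) into $\mathrm{SO}(n-m)$; (b) for $k,m\ge 1$ with $k+m\le n-1$ one has $\Upsilon^k\circ\Upsilon^m=\Upsilon^{k+m}$ (wherever both sides are defined), where $\Upsilon^k$ on the right of the composition is the analogous map $\mathrm{SO}(n-m)\to\mathrm{SO}(n-m-k)$; (c) for $1\le p\le n-1$, if $g\in\mathrm{SO}(n)$ is such that $1+g$ is invertible and $\Upsilon^{n-p}(g)$ is defined, and $S=(g-1)(g+1)^{-1}$, then $$\{S\}_p=\big(\Upsilon^{n-p}(g)-1\big)\big(\Upsilon^{n-p}(g)+1\big)^{-1},$$ where $\{S\}_p$ denotes the lower right $p\times p$ corner of $S$.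
   Context: For a matrix $A$, $\{A\}_p$ denotes its lower right $p\times p$ corner. *)

theory Defs
  imports "Jordan_Normal_Form.Gauss_Jordan_Elimination" "Jordan_Normal_Form.Determinant"
begin

definition SO :: "nat \<Rightarrow> real mat set" where
  "SO n = {A \<in> carrier_mat n n. A * transpose_mat A = 1\<^sub>m n \<and> det A = 1}"

text \<open>Total version of the matrix inverse (only used where the matrix is invertible).\<close>
definition minv :: "real mat \<Rightarrow> real mat" where
  "minv A = (case mat_inverse A of Some B \<Rightarrow> B | None \<Rightarrow> 0\<^sub>m (dim_row A) (dim_col A))"

definition blkP :: "nat \<Rightarrow> real mat \<Rightarrow> real mat" where
  "blkP m g = mat m m (\<lambda>(i,j). g $$ (i, j))"
definition blkQ :: "nat \<Rightarrow> real mat \<Rightarrow> real mat" where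
  "blkQ m g = mat m (dim_row g - m) (\<lambda>(i,j). g $$ (i, m + j))"
definition blkR :: "nat \<Rightarrow> real mat \<Rightarrow> real mat" where
  "blkR m g = mat (dim_row g - m) m (\<lambda>(i,j). g $$ (m + i, j))"
definition blkT :: "nat \<Rightarrow> real mat \<Rightarrow> real mat" where
  "blkT m g = mat (dim_row g - m) (dim_row g - m) (\<lambda>(i,j). g $$ (m + i, m + j))"

definition Ups_defined :: "nat \<Rightarrow> real mat \<Rightarrow> bool" where
  "Ups_defined m g \<longleftrightarrow> det (1\<^sub>m m + blkP m g) \<noteq> 0"

definition Ups :: "nat \<Rightarrow> real mat \<Rightarrow> real mat" where
  "Ups m g = blkT m g - blkR m g * minv (1\<^sub>m m + blkP m g) * blkQ m g"

definition corner :: "nat \<Rightarrow> real mat \<Rightarrow> real mat" where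
  "corner p A = mat p p (\<lambda>(i,j). A $$ (dim_row A - p + i, dim_col A - p + j))"

end

theory Submission
  imports Defs
begin


lemma minv_carrier: assumes "A \<in> carrier_mat k k" shows "minv A \<in> carrier_mat k k"
proof (cases "mat_inverse A")
  case None thus ?thesis using assms unfolding minv_def by auto
next
  case (Some B) thus ?thesis using mat_inverse(2)[OF assms Some] unfolding minv_def by auto
qed

lemma minv_inv: assumes A: "A \<in> carrier_mat k k" and d: "det A \<noteq> 0"
  shows "A * minv A = 1\<^sub>m k" "minv A * A = 1\<^sub>m k"
proof -
  have "mat_inverse A \<noteq> None"
    using mat_inverse(1)[OF A, of undefined] det_non_zero_imp_unit[OF A d, of undefined] by auto
  then obtain B where B: "mat_inverse A = Some B" by auto
  from mat_inverse(2)[OF A B] B show "A * minv A = 1\<^sub>m k" "minv A * A = 1\<^sub>m k"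
    unfolding minv_def by auto
qed

lemma blk_carrier: assumes "g \<in> carrier_mat n n"
  shows "blkP m g \<in> carrier_mat m m" "blkQ m g \<in> carrier_mat m (n-m)"
    "blkR m g \<in> carrier_mat (n-m) m" "blkT m g \<in> carrier_mat (n-m) (n-m)"
  using assms unfolding blkP_def blkQ_def blkR_def blkT_def by auto

lemma Ups_carrier: assumes "g \<in> carrier_mat n n"
  shows "Ups m g \<in> carrier_mat (n-m) (n-m)"
proof -
  have "1\<^sub>m m + blkP m g \<in> carrier_mat m m" using blk_carrier[OF assms] by auto
  from minv_carrier[OF this] show ?thesis using blk_carrier[OF assms] unfolding Ups_def
    by (intro minus_carrier_mat mult_carrier_mat) auto
qed

lemma g_four_block: assumes "g \<in> carrier_mat n n" "m \<le> n"
  shows "g = four_block_mat (blkP m g) (blkQ m g) (blkR m g) (blkT m g)"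
  using assms unfolding blkP_def blkQ_def blkR_def blkT_def
  by (intro eq_matI) auto

lemma g_mult_append: assumes g: "g \<in> carrier_mat n n" and mn: "m \<le> n"
  and x1: "x1 \<in> carrier_vec m" and x2: "x2 \<in> carrier_vec (n-m)"
  shows "g *\<^sub>v (x1 @\<^sub>v x2) = (blkP m g *\<^sub>v x1 + blkQ m g *\<^sub>v x2) @\<^sub>v (blkR m g *\<^sub>v x1 + blkT m g *\<^sub>v x2)"
  apply (subst g_four_block[OF g mn])
  by (rule four_block_mat_mult_vec[OF blk_carrier[OF g] x1 x2])

lemma mat_eq_vecI: assumes A: "(A::real mat) \<in> carrier_mat r c" and B: "B \<in> carrier_mat r c"
  and eq: "\<And>v. v \<in> carrier_vec c \<Longrightarrow> A *\<^sub>v v = B *\<^sub>v v"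
shows "A = B"
proof (rule eq_matI)
  fix i j assume i: "i < dim_row B" and j: "j < dim_col B"
  have "(A *\<^sub>v unit_vec c j) $ i = (B *\<^sub>v unit_vec c j) $ i" using eq[of "unit_vec c j"] by simp
  thus "A $$ (i,j) = B $$ (i,j)" using A B i j by simp
qed (use A B in auto)

lemma mult_uminus_vec: assumes "(A::real mat) \<in> carrier_mat r c" "v \<in> carrier_vec c"
  shows "A *\<^sub>v (- v) = - (A *\<^sub>v v)"
  using assms by (intro eq_vecI) auto

lemma Ups_fwd: assumes g: "g \<in> carrier_mat n n" and mn: "m \<le> n" and d: "Ups_defined m g"
  and x2: "x2 \<in> carrier_vec (n-m)"
  and x1: "x1 = - (minv (1\<^sub>m m + blkP m g) *\<^sub>v (blkQ m g *\<^sub>v x2))"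
shows "blkP m g *\<^sub>v x1 + blkQ m g *\<^sub>v x2 = - x1"
  "blkR m g *\<^sub>v x1 + blkT m g *\<^sub>v x2 = Ups m g *\<^sub>v x2"
  "x1 \<in> carrier_vec m"
proof -
  note c = blk_carrier[OF g, of m]
  define A where "A = 1\<^sub>m m + blkP m g"
  have A: "A \<in> carrier_mat m m" using c unfolding A_def by auto
  have Ai: "minv A \<in> carrier_mat m m" using minv_carrier[OF A] .
  have dA: "det A \<noteq> 0" using d unfolding Ups_defined_def A_def .
  have y: "blkQ m g *\<^sub>v x2 \<in> carrier_vec m" using c x2 by auto
  show x1c: "x1 \<in> carrier_vec m" using x1 Ai y unfolding A_def by auto
  have "A *\<^sub>v x1 = - (A *\<^sub>v (minv A *\<^sub>v (blkQ m g *\<^sub>v x2)))"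
    using x1 A Ai y mult_uminus_vec unfolding A_def by auto
  also have "A *\<^sub>v (minv A *\<^sub>v (blkQ m g *\<^sub>v x2)) = (A * minv A) *\<^sub>v (blkQ m g *\<^sub>v x2)"
    using A Ai y by simp
  also have "\<dots> = blkQ m g *\<^sub>v x2" using minv_inv[OF A dA] y by simp
  finally have e: "A *\<^sub>v x1 = - (blkQ m g *\<^sub>v x2)" .
  have "A *\<^sub>v x1 = x1 + blkP m g *\<^sub>v x1" unfolding A_def
    using c x1c by (subst add_mult_distrib_mat_vec[of _ m m]) auto
  with e have e2: "x1 + blkP m g *\<^sub>v x1 = - (blkQ m g *\<^sub>v x2)" by simp
  show "blkP m g *\<^sub>v x1 + blkQ m g *\<^sub>v x2 = - x1"
  proof (rule eq_vecI)
    fix i assume i: "i < dim_vec (- x1)"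
    have "(x1 + blkP m g *\<^sub>v x1) $ i = (- (blkQ m g *\<^sub>v x2)) $ i" using e2 by simp
    thus "(blkP m g *\<^sub>v x1 + blkQ m g *\<^sub>v x2) $ i = (- x1) $ i" using i x1c c y by auto
  qed (use x1c c in auto)
  have "Ups m g *\<^sub>v x2 = blkT m g *\<^sub>v x2 - (blkR m g * minv A * blkQ m g) *\<^sub>v x2"
    unfolding Ups_def A_def[symmetric] using c Ai x2
    by (intro minus_mult_distrib_mat_vec) auto
  also have "(blkR m g * minv A * blkQ m g) *\<^sub>v x2 = blkR m g *\<^sub>v (minv A *\<^sub>v (blkQ m g *\<^sub>v x2))"
  proof -
    have "(blkR m g * minv A * blkQ m g) *\<^sub>v x2 = (blkR m g * minv A) *\<^sub>v (blkQ m g *\<^sub>v x2)"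
      using c Ai x2 by (intro assoc_mult_mat_vec[of _ "n-m" m]) auto
    also have "\<dots> = blkR m g *\<^sub>v (minv A *\<^sub>v (blkQ m g *\<^sub>v x2))"
      using c Ai x2 by (intro assoc_mult_mat_vec[of _ "n-m" m]) auto
    finally show ?thesis .
  qed
  also have "\<dots> = - (blkR m g *\<^sub>v x1)"
    using x1 c Ai y mult_uminus_vec[of "blkR m g" "n-m" m] unfolding A_def by auto
  finally show "blkR m g *\<^sub>v x1 + blkT m g *\<^sub>v x2 = Ups m g *\<^sub>v x2"
    using c x1c x2 by (intro eq_vecI) auto
qed

lemma Ups_ex: assumes g: "g \<in> carrier_mat n n" and mn: "m \<le> n" and d: "Ups_defined m g"
  and x2: "x2 \<in> carrier_vec (n-m)"
shows "\<exists>x1 \<in> carrier_vec m. g *\<^sub>v (x1 @\<^sub>v x2) = (- x1) @\<^sub>v (Ups m g *\<^sub>v x2)"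
proof -
  define x1 where "x1 = - (minv (1\<^sub>m m + blkP m g) *\<^sub>v (blkQ m g *\<^sub>v x2))"
  note f = Ups_fwd[OF g mn d x2 x1_def]
  show ?thesis using f g_mult_append[OF g mn f(3) x2] by auto
qed

lemma Ups_bwd: assumes g: "g \<in> carrier_mat n n" and mn: "m \<le> n" and d: "Ups_defined m g"
  and x1: "x1 \<in> carrier_vec m" and x2: "x2 \<in> carrier_vec (n-m)"
  and e: "g *\<^sub>v (x1 @\<^sub>v x2) = (- x1) @\<^sub>v y"
shows "y = Ups m g *\<^sub>v x2"
proof -
  note c = blk_carrier[OF g, of m]
  define A where "A = 1\<^sub>m m + blkP m g"
  have A: "A \<in> carrier_mat m m" using c unfolding A_def by auto
  have Ai: "minv A \<in> carrier_mat m m" using minv_carrier[OF A] .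
  have dA: "det A \<noteq> 0" using d unfolding Ups_defined_def A_def .
  have y: "blkQ m g *\<^sub>v x2 \<in> carrier_vec m" using c x2 by auto
  have e2: "blkP m g *\<^sub>v x1 + blkQ m g *\<^sub>v x2 = - x1 \<and> blkR m g *\<^sub>v x1 + blkT m g *\<^sub>v x2 = y"
    using e unfolding g_mult_append[OF g mn x1 x2]
    by (subst (asm) append_vec_eq[of _ m]) (use c x1 x2 in auto)
  have "A *\<^sub>v x1 = x1 + blkP m g *\<^sub>v x1" unfolding A_def
    using c x1 by (subst add_mult_distrib_mat_vec[of _ m m]) auto
  also have "\<dots> = - (blkQ m g *\<^sub>v x2)"
  proof (rule eq_vecI)
    fix i assume i: "i < dim_vec (- (blkQ m g *\<^sub>v x2))"
    have "(blkP m g *\<^sub>v x1 + blkQ m g *\<^sub>v x2) $ i = (- x1) $ i" using e2 by simp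
    thus "(x1 + blkP m g *\<^sub>v x1) $ i = (- (blkQ m g *\<^sub>v x2)) $ i" using i x1 c y by auto
  qed (use x1 c in auto)
  finally have eA: "A *\<^sub>v x1 = - (blkQ m g *\<^sub>v x2)" .
  have "x1 = (minv A * A) *\<^sub>v x1" using minv_inv[OF A dA] x1 by simp
  also have "\<dots> = minv A *\<^sub>v (A *\<^sub>v x1)" using A Ai x1 by simp
  also have "\<dots> = - (minv A *\<^sub>v (blkQ m g *\<^sub>v x2))" unfolding eA using mult_uminus_vec[OF Ai y] .
  finally have "x1 = - (minv (1\<^sub>m m + blkP m g) *\<^sub>v (blkQ m g *\<^sub>v x2))" unfolding A_def .
  from Ups_fwd(2)[OF g mn d x2 this] e2 show ?thesis by simp
qed

lemma append_vec_assoc: "(a @\<^sub>v b) @\<^sub>v c = a @\<^sub>v (b @\<^sub>v c)"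
  by (intro eq_vecI) auto

lemma append_vec_uminus: "- (a @\<^sub>v (b :: real vec)) = (- a) @\<^sub>v (- b)"
  by (intro eq_vecI) auto

lemma part_b: assumes g: "g \<in> carrier_mat n n" and km: "k + m \<le> n"
  and d1: "Ups_defined m g" and d2: "Ups_defined k (Ups m g)" and d3: "Ups_defined (k + m) g"
shows "Ups k (Ups m g) = Ups (k + m) g"
proof -
  have mn: "m \<le> n" "k + m \<le> n" "k \<le> n - m" using km by auto
  have U: "Ups m g \<in> carrier_mat (n-m) (n-m)" using Ups_carrier[OF g] .
  have nn: "n - m - k = n - (k + m)" by simp
  show ?thesis
  proof (rule mat_eq_vecI)
    show "Ups k (Ups m g) \<in> carrier_mat (n - (k+m)) (n - (k+m))"
      using Ups_carrier[OF U, of k] unfolding nn .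
    show "Ups (k + m) g \<in> carrier_mat (n - (k+m)) (n - (k+m))" using Ups_carrier[OF g] .
    fix x3 :: "real vec" assume x3: "x3 \<in> carrier_vec (n - (k+m))"
    obtain x12 where x12: "x12 \<in> carrier_vec (k+m)"
      and e: "g *\<^sub>v (x12 @\<^sub>v x3) = (- x12) @\<^sub>v (Ups (k+m) g *\<^sub>v x3)"
      using Ups_ex[OF g mn(2) d3 x3] by blast
    define x1 where "x1 = vec_first x12 m"
    define x2 where "x2 = vec_last x12 k"
    have x1: "x1 \<in> carrier_vec m" and x2: "x2 \<in> carrier_vec k" unfolding x1_def x2_def by auto
    have "x12 = x1 @\<^sub>v x2" unfolding x1_def x2_def
      by (rule vec_first_last_append[symmetric]) (use x12 in \<open>simp only: add.commute\<close>)
    hence x12e: "x12 = x1 @\<^sub>v x2" .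
    have e': "g *\<^sub>v (x1 @\<^sub>v (x2 @\<^sub>v x3)) = (- x1) @\<^sub>v ((- x2) @\<^sub>v (Ups (k+m) g *\<^sub>v x3))"
      using e unfolding x12e append_vec_assoc append_vec_uminus .
    have x23: "x2 @\<^sub>v x3 \<in> carrier_vec (n - m)"
    proof -
      have "k + (n - (k+m)) = n - m" using km by simp
      thus ?thesis using append_carrier_vec[OF x2 x3] by simp
    qed
    have e2: "Ups m g *\<^sub>v (x2 @\<^sub>v x3) = (- x2) @\<^sub>v (Ups (k+m) g *\<^sub>v x3)"
      using Ups_bwd[OF g mn(1) d1 x1 x23 e'] by (rule sym)
    have x3': "x3 \<in> carrier_vec (n - m - k)" using x3 unfolding nn .
    show "Ups k (Ups m g) *\<^sub>v x3 = Ups (k + m) g *\<^sub>v x3"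
      using Ups_bwd[OF U mn(3) d2 x2 x3' e2] by simp
  qed
qed

lemma col_as_mult: assumes "(A::real mat) \<in> carrier_mat r c" "j < c"
  shows "col A j = A *\<^sub>v unit_vec c j"
  using assms by (intro eq_vecI) auto

lemma SO_tg: assumes "g \<in> SO n" shows "g \<in> carrier_mat n n" "transpose_mat g * g = 1\<^sub>m n"
  "g * transpose_mat g = 1\<^sub>m n" "det g = 1"
proof -
  show g: "g \<in> carrier_mat n n" using assms unfolding SO_def by auto
  show gt: "g * transpose_mat g = 1\<^sub>m n" "det g = 1" using assms unfolding SO_def by auto
  show "transpose_mat g * g = 1\<^sub>m n"
    by (rule mat_mult_left_right_inverse[OF g _ gt(1)]) (use g in auto)
qed

lemma orth_pres: assumes g: "(g::real mat) \<in> carrier_mat n n" and tg: "transpose_mat g * g = 1\<^sub>m n"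
  and v: "v \<in> carrier_vec n" and w: "w \<in> carrier_vec n"
shows "(g *\<^sub>v v) \<bullet> (g *\<^sub>v w) = v \<bullet> w"
proof -
  have "(g *\<^sub>v v) \<bullet> (g *\<^sub>v w) = (transpose_mat g *\<^sub>v (g *\<^sub>v v)) \<bullet> w"
    using transpose_vec_mult_scalar[OF g w, of "g *\<^sub>v v"] g v by simp
  also have "transpose_mat g *\<^sub>v (g *\<^sub>v v) = (transpose_mat g * g) *\<^sub>v v"
    using g v by simp
  also have "\<dots> = v" using tg v by simp
  finally show ?thesis .
qed

lemma part_a_orth: assumes gS: "g \<in> SO n" and mn: "m \<le> n" and d: "Ups_defined m g"
  shows "transpose_mat (Ups m g) * Ups m g = 1\<^sub>m (n-m)" "Ups m g * transpose_mat (Ups m g) = 1\<^sub>m (n-m)"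
proof -
  note g = SO_tg(1)[OF gS] and tg = SO_tg(2)[OF gS]
  have U: "Ups m g \<in> carrier_mat (n-m) (n-m)" using Ups_carrier[OF g] .
  have pres: "(Ups m g *\<^sub>v x2) \<bullet> (Ups m g *\<^sub>v y2) = x2 \<bullet> y2"
    if x2: "x2 \<in> carrier_vec (n-m)" and y2: "y2 \<in> carrier_vec (n-m)" for x2 y2
  proof -
    obtain x1 where x1: "x1 \<in> carrier_vec m" and ex: "g *\<^sub>v (x1 @\<^sub>v x2) = (- x1) @\<^sub>v (Ups m g *\<^sub>v x2)"
      using Ups_ex[OF g mn d x2] by blast
    obtain y1 where y1: "y1 \<in> carrier_vec m" and ey: "g *\<^sub>v (y1 @\<^sub>v y2) = (- y1) @\<^sub>v (Ups m g *\<^sub>v y2)"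
      using Ups_ex[OF g mn d y2] by blast
    have xc: "x1 @\<^sub>v x2 \<in> carrier_vec n" and yc: "y1 @\<^sub>v y2 \<in> carrier_vec n"
      using append_carrier_vec[OF x1 x2] append_carrier_vec[OF y1 y2] mn by auto
    have "(g *\<^sub>v (x1 @\<^sub>v x2)) \<bullet> (g *\<^sub>v (y1 @\<^sub>v y2)) = (x1 @\<^sub>v x2) \<bullet> (y1 @\<^sub>v y2)"
      using orth_pres[OF g tg xc yc] .
    hence "(- x1) \<bullet> (- y1) + (Ups m g *\<^sub>v x2) \<bullet> (Ups m g *\<^sub>v y2) = x1 \<bullet> y1 + x2 \<bullet> y2"
      unfolding ex ey
      by (subst (asm) scalar_prod_append[of _ m _ "n-m"], (use x1 y1 x2 y2 U in auto)[4],
          subst (asm) scalar_prod_append[of _ m _ "n-m"], (use x1 y1 x2 y2 U in auto)[4])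
    moreover have "(- x1) \<bullet> (- y1) = x1 \<bullet> y1" using x1 y1 by simp
    ultimately show ?thesis by simp
  qed
  show tU: "transpose_mat (Ups m g) * Ups m g = 1\<^sub>m (n-m)"
  proof (rule eq_matI)
    fix i j assume i: "i < dim_row (1\<^sub>m (n-m) :: real mat)" and j: "j < dim_col (1\<^sub>m (n-m) :: real mat)"
    have "(transpose_mat (Ups m g) * Ups m g) $$ (i,j) = col (Ups m g) i \<bullet> col (Ups m g) j"
      using i j U by simp
    also have "\<dots> = (Ups m g *\<^sub>v unit_vec (n-m) i) \<bullet> (Ups m g *\<^sub>v unit_vec (n-m) j)"
      using col_as_mult[OF U] i j by simp
    also have "\<dots> = unit_vec (n-m) i \<bullet> unit_vec (n-m) j" by (rule pres) auto
    also have "\<dots> = 1\<^sub>m (n-m) $$ (i,j)" using i j by simp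
    finally show "(transpose_mat (Ups m g) * Ups m g) $$ (i,j) = 1\<^sub>m (n-m) $$ (i,j)" .
  qed (use U in auto)
  show "Ups m g * transpose_mat (Ups m g) = 1\<^sub>m (n-m)"
    by (rule mat_mult_left_right_inverse[OF _ U tU]) (use U in auto)
qed

lemma part_a_det: assumes gS: "g \<in> SO n" and mn: "m \<le> n" and d: "Ups_defined m g"
  shows "det (Ups m g) = 1"
proof -
  note g = SO_tg(1)[OF gS] and tg = SO_tg(2)[OF gS] and dg = SO_tg(4)[OF gS]
  note c = blk_carrier[OF g, of m]
  define P where "P = blkP m g"
  define Q where "Q = blkQ m g"
  define R where "R = blkR m g"
  define T where "T = blkT m g"
  have cP: "P \<in> carrier_mat m m" and cQ: "Q \<in> carrier_mat m (n-m)"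
    and cR: "R \<in> carrier_mat (n-m) m" and cT: "T \<in> carrier_mat (n-m) (n-m)"
    using c unfolding P_def Q_def R_def T_def by auto
  define A where "A = 1\<^sub>m m + P"
  have cA: "A \<in> carrier_mat m m" using cP unfolding A_def by auto
  have cAi: "minv A \<in> carrier_mat m m" using minv_carrier[OF cA] .
  have dA: "det A \<noteq> 0" using d unfolding Ups_defined_def A_def P_def .
  note inv = minv_inv[OF cA dA]
  define X where "X = minv A * Q"
  have cX: "X \<in> carrier_mat m (n-m)" using cAi cQ unfolding X_def by auto
  have U: "Ups m g = T - R * X" unfolding Ups_def X_def A_def P_def Q_def R_def T_def
    using c minv_carrier[OF cA[unfolded A_def P_def]] by simp
  have cU: "Ups m g \<in> carrier_mat (n-m) (n-m)" using Ups_carrier[OF g] .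
  have nm: "m + (n - m) = n" using mn by simp
  have gb: "g = four_block_mat P Q R T" unfolding P_def Q_def R_def T_def by (rule g_four_block[OF g mn])
  define E where "E = four_block_mat (1\<^sub>m m) (0\<^sub>m m (n-m)) (0\<^sub>m (n-m) m) (0\<^sub>m (n-m) (n-m) :: real mat)"
  have cE: "E \<in> carrier_mat n n" unfolding E_def using four_block_carrier_mat[of "1\<^sub>m m" m m "0\<^sub>m (n-m) (n-m)" "n-m" "n-m"] nm
    by simp
  define M where "M = four_block_mat A Q R T"
  have cM: "M \<in> carrier_mat n n" unfolding M_def using four_block_carrier_mat[OF cA cT] nm by simp
  have ME: "M = g + E" unfolding M_def E_def A_def gb
    by (subst add_four_block_mat[OF cP cQ cR cT]) (auto, (rule cong_four_block_mat; rule eq_matI; use cP cQ cR cT in auto))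
  define N where "N = four_block_mat (1\<^sub>m m) (- X) (0\<^sub>m (n-m) m) (1\<^sub>m (n-m))"
  have cN: "N \<in> carrier_mat n n" unfolding N_def using four_block_carrier_mat[of "1\<^sub>m m" m m "1\<^sub>m (n-m)" "n-m" "n-m"] nm
    by simp
  have dN: "det N = 1" unfolding N_def
    by (subst det_four_block_mat_lower_left_zero[of _ m _ "n-m"]) (use cX in auto)
  have AX: "A * X = Q" unfolding X_def using cA cAi cQ inv
    by (subst assoc_mult_mat[symmetric, of _ m m _ m]) auto
  have MN: "M * N = four_block_mat A (0\<^sub>m m (n-m)) R (Ups m g)"
    unfolding M_def N_def
  proof (subst mult_four_block_mat[OF cA cQ cR cT])
    show "four_block_mat (A * 1\<^sub>m m + Q * 0\<^sub>m (n - m) m) (A * - X + Q * 1\<^sub>m (n - m))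
     (R * 1\<^sub>m m + T * 0\<^sub>m (n - m) m) (R * - X + T * 1\<^sub>m (n - m)) =
      four_block_mat A (0\<^sub>m m (n - m)) R (Ups m g)"
    proof (rule cong_four_block_mat)
      show "A * 1\<^sub>m m + Q * 0\<^sub>m (n - m) m = A" using cA cQ by simp
      show "R * 1\<^sub>m m + T * 0\<^sub>m (n - m) m = R" using cR cT by simp
      show "A * - X + Q * 1\<^sub>m (n - m) = 0\<^sub>m m (n - m)" using AX cA cX cQ by simp
      show "R * - X + T * 1\<^sub>m (n - m) = Ups m g" unfolding U using cR cX cT
        by (intro eq_matI) auto
    qed
  qed (use cX in auto)
  have "det (M * N) = det A * det (Ups m g)" unfolding MN
    by (rule det_four_block_mat_upper_right_zero[OF cA refl _ cU]) (use cR in auto)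
  moreover have "det (M * N) = det M" using det_mult[OF cM cN] dN by simp
  moreover have "det M = det A"
  proof -
    have one_blk: "1\<^sub>m n = four_block_mat (1\<^sub>m m) (0\<^sub>m m (n-m)) (0\<^sub>m (n-m) m) (1\<^sub>m (n-m) :: real mat)"
      using four_block_one_mat[of m "n-m"] nm by simp
    have Et: "transpose_mat E = E" unfolding E_def by (intro eq_matI) auto
    have Eg: "E * g = four_block_mat P Q (0\<^sub>m (n-m) m) (0\<^sub>m (n-m) (n-m))"
      unfolding E_def gb
      by (subst mult_four_block_mat[of _ m m _ "n-m"]) (use cP cQ cR cT in auto)
    have "transpose_mat M * g = (transpose_mat g + E) * g"
      unfolding ME using g cE by (simp add: transpose_add Et)
    also have "\<dots> = transpose_mat g * g + E * g"
      using g cE by (intro add_mult_distrib_mat[of _ n n]) auto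
    also have "\<dots> = four_block_mat A Q (0\<^sub>m (n-m) m) (1\<^sub>m (n-m))"
      unfolding tg Eg one_blk A_def
      by (subst add_four_block_mat[of _ m m _ "n-m"]) (use cP cQ in auto)
    finally have e: "transpose_mat M * g = four_block_mat A Q (0\<^sub>m (n-m) m) (1\<^sub>m (n-m))" .
    have "det (transpose_mat M * g) = det A"
      unfolding e by (subst det_four_block_mat_lower_left_zero[OF cA cQ]) auto
    moreover have "det (transpose_mat M * g) = det M"
      using det_mult[of "transpose_mat M" n g] cM g dg det_transpose[OF cM] by simp
    ultimately show ?thesis by simp
  qed
  ultimately show ?thesis using dA by simp
qed

lemma invertible_det: assumes G: "(G::real mat) \<in> carrier_mat n n" and inv: "invertible_mat G"
  shows "det G \<noteq> 0"
proof -
  from inv obtain B where GB: "G * B = 1\<^sub>m n" and BG: "B * G = 1\<^sub>m (dim_row B)"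
    unfolding invertible_mat_def inverts_mat_def using G by auto
  have "dim_col B = n" using GB by (metis index_mult_mat(3) index_one_mat(3))
  moreover have "dim_row B = n" using BG G by (metis carrier_matD(2) index_mult_mat(3) index_one_mat(3))
  ultimately have B: "B \<in> carrier_mat n n" by auto
  from det_mult[OF G B] GB show ?thesis by auto
qed

lemma part_c: assumes g: "g \<in> carrier_mat n n" and pn: "p \<le> n"
  and inv: "invertible_mat (g + 1\<^sub>m n)" and d: "Ups_defined (n - p) g"
shows "corner p ((g - 1\<^sub>m n) * minv (g + 1\<^sub>m n))
            = (Ups (n - p) g - 1\<^sub>m p) * minv (Ups (n - p) g + 1\<^sub>m p)"
proof -
  define m where "m = n - p"
  have pm: "n - m = p" "m \<le> n" "m + p = n" unfolding m_def using pn by auto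
  define G where "G = g + 1\<^sub>m n"
  have cG: "G \<in> carrier_mat n n" using g unfolding G_def by auto
  have dG: "det G \<noteq> 0" using invertible_det[OF cG] inv unfolding G_def by auto
  note invG = minv_inv[OF cG dG]
  have cGi: "minv G \<in> carrier_mat n n" using minv_carrier[OF cG] .
  define S where "S = (g - 1\<^sub>m n) * minv G"
  have cS: "S \<in> carrier_mat n n" unfolding S_def using g cGi by (intro mult_carrier_mat minus_carrier_mat) auto
  have SG: "S * G = g - 1\<^sub>m n" unfolding S_def using g cGi cG invG by (subst assoc_mult_mat[of _ n n _ n]) auto
  define U where "U = Ups m g"
  have cU: "U \<in> carrier_mat p p" using Ups_carrier[OF g, of m] pm unfolding U_def by simp
  have dm: "Ups_defined m g" using d unfolding m_def .
  have corner: "corner p S = blkT m S" unfolding corner_def blkT_def using cS pm by (intro eq_matI) (auto simp: add.commute)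
  note cSb = blk_carrier[OF cS, of m, unfolded pm(1)]
  have key: "blkT m S * (U + 1\<^sub>m p) = U - 1\<^sub>m p"
  proof (rule mat_eq_vecI)
    show "blkT m S * (U + 1\<^sub>m p) \<in> carrier_mat p p" using cSb cU by auto
    show "U - 1\<^sub>m p \<in> carrier_mat p p" using cU by auto
    fix x2 :: "real vec" assume x2: "x2 \<in> carrier_vec p"
    have x2': "x2 \<in> carrier_vec (n - m)" using x2 pm by simp
    obtain x1 where x1: "x1 \<in> carrier_vec m" and ex: "g *\<^sub>v (x1 @\<^sub>v x2) = (- x1) @\<^sub>v (U *\<^sub>v x2)"
      using Ups_ex[OF g pm(2) dm x2'] unfolding U_def by blast
    have xc: "x1 @\<^sub>v x2 \<in> carrier_vec n" using append_carrier_vec[OF x1 x2] pm by simp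
    have Up: "(U + 1\<^sub>m p) *\<^sub>v x2 = U *\<^sub>v x2 + x2" using cU x2 by (subst add_mult_distrib_mat_vec[of _ p p]) auto
    have Um: "(U - 1\<^sub>m p) *\<^sub>v x2 = U *\<^sub>v x2 - x2" using cU x2 by (subst minus_mult_distrib_mat_vec[of _ p p]) auto
    have Gx: "G *\<^sub>v (x1 @\<^sub>v x2) = 0\<^sub>v m @\<^sub>v ((U + 1\<^sub>m p) *\<^sub>v x2)"
    proof -
      have "G *\<^sub>v (x1 @\<^sub>v x2) = g *\<^sub>v (x1 @\<^sub>v x2) + (x1 @\<^sub>v x2)" unfolding G_def
        using g xc by (subst add_mult_distrib_mat_vec[of _ n n]) auto
      also have "\<dots> = 0\<^sub>v m @\<^sub>v ((U + 1\<^sub>m p) *\<^sub>v x2)" unfolding ex Up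
        using x1 x2 cU by (intro eq_vecI) auto
      finally show ?thesis .
    qed
    have gmx: "(g - 1\<^sub>m n) *\<^sub>v (x1 @\<^sub>v x2) = (- x1 - x1) @\<^sub>v ((U - 1\<^sub>m p) *\<^sub>v x2)"
    proof -
      have "(g - 1\<^sub>m n) *\<^sub>v (x1 @\<^sub>v x2) = g *\<^sub>v (x1 @\<^sub>v x2) - (x1 @\<^sub>v x2)"
        using g xc by (subst minus_mult_distrib_mat_vec[of _ n n]) auto
      also have "\<dots> = (- x1 - x1) @\<^sub>v ((U - 1\<^sub>m p) *\<^sub>v x2)" unfolding ex Um
        using x1 x2 cU by (intro eq_vecI) auto
      finally show ?thesis .
    qed
    have "S *\<^sub>v (G *\<^sub>v (x1 @\<^sub>v x2)) = (S * G) *\<^sub>v (x1 @\<^sub>v x2)" using cS cG xc by simp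
    hence "S *\<^sub>v (0\<^sub>v m @\<^sub>v ((U + 1\<^sub>m p) *\<^sub>v x2)) = (- x1 - x1) @\<^sub>v ((U - 1\<^sub>m p) *\<^sub>v x2)"
      unfolding Gx SG gmx .
    moreover have "S *\<^sub>v (0\<^sub>v m @\<^sub>v ((U + 1\<^sub>m p) *\<^sub>v x2)) =
       (blkP m S *\<^sub>v 0\<^sub>v m + blkQ m S *\<^sub>v ((U + 1\<^sub>m p) *\<^sub>v x2)) @\<^sub>v
       (blkR m S *\<^sub>v 0\<^sub>v m + blkT m S *\<^sub>v ((U + 1\<^sub>m p) *\<^sub>v x2))"
    proof (rule g_mult_append[OF cS pm(2)])
      have "(U + 1\<^sub>m p) *\<^sub>v x2 \<in> carrier_vec p" using cU x2 by (intro mult_mat_vec_carrier[of _ p p]) auto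
      thus "(U + 1\<^sub>m p) *\<^sub>v x2 \<in> carrier_vec (n - m)" using pm by simp
    qed auto
    ultimately have eqa: "(blkP m S *\<^sub>v 0\<^sub>v m + blkQ m S *\<^sub>v ((U + 1\<^sub>m p) *\<^sub>v x2)) @\<^sub>v
       (blkR m S *\<^sub>v 0\<^sub>v m + blkT m S *\<^sub>v ((U + 1\<^sub>m p) *\<^sub>v x2)) = (- x1 - x1) @\<^sub>v ((U - 1\<^sub>m p) *\<^sub>v x2)"
      by simp
    have c1: "blkP m S *\<^sub>v 0\<^sub>v m + blkQ m S *\<^sub>v ((U + 1\<^sub>m p) *\<^sub>v x2) \<in> carrier_vec m"
    proof -
      have "(U + 1\<^sub>m p) *\<^sub>v x2 \<in> carrier_vec p" using cU x2 by (intro mult_mat_vec_carrier[of _ p p]) auto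
      thus ?thesis using cSb by auto
    qed
    have c2: "- x1 - x1 \<in> carrier_vec m" using x1 by auto
    have "blkR m S *\<^sub>v 0\<^sub>v m + blkT m S *\<^sub>v ((U + 1\<^sub>m p) *\<^sub>v x2) = (U - 1\<^sub>m p) *\<^sub>v x2"
      using eqa append_vec_eq[OF c1 c2] by blast
    moreover have "blkR m S *\<^sub>v 0\<^sub>v m + blkT m S *\<^sub>v ((U + 1\<^sub>m p) *\<^sub>v x2) = blkT m S *\<^sub>v ((U + 1\<^sub>m p) *\<^sub>v x2)"
      using cSb cU x2 by (intro eq_vecI) auto
    ultimately have "blkT m S *\<^sub>v ((U + 1\<^sub>m p) *\<^sub>v x2) = (U - 1\<^sub>m p) *\<^sub>v x2" by simp
    moreover have "(blkT m S * (U + 1\<^sub>m p)) *\<^sub>v x2 = blkT m S *\<^sub>v ((U + 1\<^sub>m p) *\<^sub>v x2)"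
      using cSb cU x2 by (intro assoc_mult_mat_vec[of _ p p]) auto
    ultimately show "(blkT m S * (U + 1\<^sub>m p)) *\<^sub>v x2 = (U - 1\<^sub>m p) *\<^sub>v x2" by simp
  qed
  have cU1: "U + 1\<^sub>m p \<in> carrier_mat p p" using cU by auto
  have dU: "det (U + 1\<^sub>m p) \<noteq> 0"
  proof
    assume "det (U + 1\<^sub>m p) = 0"
    then obtain x2 where x2: "x2 \<in> carrier_vec p" "x2 \<noteq> 0\<^sub>v p" and z: "(U + 1\<^sub>m p) *\<^sub>v x2 = 0\<^sub>v p"
      using det_0_iff_vec_prod_zero[OF cU1] by auto
    have x2': "x2 \<in> carrier_vec (n - m)" using x2 pm by simp
    obtain x1 where x1: "x1 \<in> carrier_vec m" and ex: "g *\<^sub>v (x1 @\<^sub>v x2) = (- x1) @\<^sub>v (U *\<^sub>v x2)"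
      using Ups_ex[OF g pm(2) dm x2'] unfolding U_def by blast
    have xc: "x1 @\<^sub>v x2 \<in> carrier_vec n" using append_carrier_vec[OF x1 x2(1)] pm by simp
    have Up: "(U + 1\<^sub>m p) *\<^sub>v x2 = U *\<^sub>v x2 + x2" using cU x2 by (subst add_mult_distrib_mat_vec[of _ p p]) auto
    have "G *\<^sub>v (x1 @\<^sub>v x2) = g *\<^sub>v (x1 @\<^sub>v x2) + (x1 @\<^sub>v x2)" unfolding G_def
      using g xc by (subst add_mult_distrib_mat_vec[of _ n n]) auto
    also have "\<dots> = 0\<^sub>v m @\<^sub>v ((U + 1\<^sub>m p) *\<^sub>v x2)" unfolding ex Up
      using x1 x2 cU by (intro eq_vecI) auto
    also have "\<dots> = 0\<^sub>v n" unfolding z using pm by (intro eq_vecI) auto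
    finally have Gx: "G *\<^sub>v (x1 @\<^sub>v x2) = 0\<^sub>v n" .
    have "x1 @\<^sub>v x2 = (minv G * G) *\<^sub>v (x1 @\<^sub>v x2)" using invG xc by simp
    also have "\<dots> = minv G *\<^sub>v (G *\<^sub>v (x1 @\<^sub>v x2))" using cGi cG xc by simp
    also have "\<dots> = 0\<^sub>v n" unfolding Gx using cGi by (intro eq_vecI) auto
    finally have "x1 @\<^sub>v x2 = 0\<^sub>v n" .
    hence "x1 @\<^sub>v x2 = 0\<^sub>v m @\<^sub>v 0\<^sub>v p" using pm by (auto intro!: eq_vecI)
    hence "x2 = 0\<^sub>v p" by (subst (asm) append_vec_eq[of _ m]) (use x1 in auto)
    with x2 show False by simp
  qed
  note invU = minv_inv[OF cU1 dU]
  have cUi: "minv (U + 1\<^sub>m p) \<in> carrier_mat p p" using minv_carrier[OF cU1] .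
  have "blkT m S = blkT m S * ((U + 1\<^sub>m p) * minv (U + 1\<^sub>m p))" using invU cSb by simp
  also have "\<dots> = (blkT m S * (U + 1\<^sub>m p)) * minv (U + 1\<^sub>m p)"
    using cSb cU1 cUi by (subst assoc_mult_mat[of _ p p _ p]) auto
  also have "\<dots> = (U - 1\<^sub>m p) * minv (U + 1\<^sub>m p)" unfolding key ..
  finally have "corner p S = (U - 1\<^sub>m p) * minv (U + 1\<^sub>m p)" unfolding corner .
  thus ?thesis unfolding S_def G_def U_def m_def .
qed


theorem proposition2p1:
  fixes n :: nat
  assumes "n \<ge> 2"
  shows
    "(\<forall>m g. 1 \<le> m \<and> m \<le> n - 1 \<and> g \<in> SO n \<and> Ups_defined m g
        \<longrightarrow> Ups m g \<in> SO (n - m))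
   \<and> (\<forall>k m g. 1 \<le> k \<and> 1 \<le> m \<and> k + m \<le> n - 1 \<and> g \<in> SO n
        \<and> Ups_defined m g \<and> Ups_defined k (Ups m g) \<and> Ups_defined (k + m) g
        \<longrightarrow> Ups k (Ups m g) = Ups (k + m) g)
   \<and> (\<forall>p g. 1 \<le> p \<and> p \<le> n - 1 \<and> g \<in> SO n \<and> invertible_mat (g + 1\<^sub>m n)
        \<and> Ups_defined (n - p) g
        \<longrightarrow> corner p ((g - 1\<^sub>m n) * minv (g + 1\<^sub>m n))
            = (Ups (n - p) g - 1\<^sub>m p) * minv (Ups (n - p) g + 1\<^sub>m p))"
proof (intro conjI allI impI)
  fix m g assume h: "1 \<le> m \<and> m \<le> n - 1 \<and> g \<in> SO n \<and> Ups_defined m g"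
  hence gS: "g \<in> SO n" and mn: "m \<le> n" and d: "Ups_defined m g" by auto
  show "Ups m g \<in> SO (n - m)" unfolding SO_def
    using Ups_carrier[OF SO_tg(1)[OF gS], of m] part_a_orth(2)[OF gS mn d] part_a_det[OF gS mn d] by auto
next
  fix k m g assume h: "1 \<le> k \<and> 1 \<le> m \<and> k + m \<le> n - 1 \<and> g \<in> SO n
        \<and> Ups_defined m g \<and> Ups_defined k (Ups m g) \<and> Ups_defined (k + m) g"
  show "Ups k (Ups m g) = Ups (k + m) g"
    by (rule part_b[of g n]) (use h SO_tg(1) in auto)
next
  fix p g assume h: "1 \<le> p \<and> p \<le> n - 1 \<and> g \<in> SO n \<and> invertible_mat (g + 1\<^sub>m n)
        \<and> Ups_defined (n - p) g"
  show "corner p ((g - 1\<^sub>m n) * minv (g + 1\<^sub>m n))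
            = (Ups (n - p) g - 1\<^sub>m p) * minv (Ups (n - p) g + 1\<^sub>m p)"
    by (rule part_c) (use h SO_tg(1) in auto)
qed

end
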